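(* Assume that $(X_1,Y_1),\dots,(X_{n+1},Y_{n+1})$ are exchangeable, that the predictor $\hat f_D$ is invariant to permutations of the data in $D$, and that the non-conformity scores $S_{D^{Y_{n+1}}}(X_1,Y_1),\dots,S_{D^{Y_{n+1}}}(X_{n+1},Y_{n+1})$ are almost surely distinct. Assume further that there exists a constant $c>0$ such that the conditional density $p(\cdot\mid D,X_{n+1})$ of $Y_{n+1}$ on $\mathcal Y$ is bounded above by $c$. Then for every $\alpha\in(0,1)$, $$\mathbb P\big[Y_{n+1}\in\tilde C_\alpha(X_{n+1})\big]\le1-\alpha+\frac1{n+1}+c\,\mathbb E_{D,X_{n+1}}\big[\mathrm{THK}_\alpha(X_{n+1})\big].$$
   Context: Let $\mathcal X\subset\mathbb R^d$, $\mathcal Y\subset\mathbb R$, $D=\{(X_1,Y_1),\dots,(X_n,Y_n)\}$, and a further pair $(X_{n+1},Y_{n+1})$. For $y\in\mathcal Y$, $D^y=D\cup\{(X_{n+1},y)\}$, $\hat f_{D^y}$ a predictor trained on $D^y$, $s:\mathcal Y\times\mathcal Y\to\mathbb R_+$ a non-conformity function, $S_{D^y}(X_i,Y_i)=s(Y_i,\hat f_{D^y}(X_i))$ ($i\le n$), $S_{D^y}(X_{n+1},y)=s(y,\hat f_{D^y}(X_{n+1}))$, $\hat\pi_D(X_{n+1},y)=\frac{1+\sum_{i=1}^n\mathbb 1\{S_{D^y}(X_i,Y_i)\ge S_{D^y}(X_{n+1},y)\}}{n+1}$, $\hat C_\alpha(X_{n+1})=\{y:\hat\pi_D(X_{n+1},y)>\alpha\}$.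 For every $y$, let $\tilde S_{D^y}(X_i,Y_i)$, $\tilde S_{D^y}(X_{n+1},y)$ be approximate scores and $0\le\tau_i(y)<\infty$ with $|S_{D^y}(X_i,Y_i)-\tilde S_{D^y}(X_i,Y_i)|\le\tau_i(y)$ ($i\le n$) and $|S_{D^y}(X_{n+1},y)-\tilde S_{D^y}(X_{n+1},y)|\le\tau_{n+1}(y)$; $\tilde\pi_D(X_{n+1},y)=\frac{1+\sum_{i=1}^n\mathbb 1\{\tilde S_{D^y}(X_i,Y_i)+\tau_i(y)\ge\tilde S_{D^y}(X_{n+1},y)-\tau_{n+1}(y)\}}{n+1}$, $\tilde C_\alpha(X_{n+1})=\{y:\tilde\pi_D(X_{n+1},y)>\alpha\}$, and $\mathrm{THK}_\alpha(X_{n+1})=\mathcal L(\tilde C_\alpha(X_{n+1})\,\Delta\,\hat C_\alpha(X_{n+1}))$ ($\mathcal L$ Lebesgue measure, $\Delta$ symmetric difference). *)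

theory Defs
  imports "HOL-Probability.Probability"
begin

text \<open>Data points are indexed 1..n+1; index n+1 (= Suc n) is the test point.
  A data set of size m is an (extensional) function on {1..m}.\<close>

definition augment :: "nat \<Rightarrow> (nat \<Rightarrow> 'a \<times> real) \<Rightarrow> 'a \<Rightarrow> real \<Rightarrow> (nat \<Rightarrow> 'a \<times> real)" where
  "augment n D x y = (\<lambda>i\<in>{1..Suc n}. if i = Suc n then (x, y) else D i)"

definition score :: "(real \<Rightarrow> real \<Rightarrow> real) \<Rightarrow> ((nat \<Rightarrow> 'a \<times> real) \<Rightarrow> 'a \<Rightarrow> real)
    \<Rightarrow> (nat \<Rightarrow> 'a \<times> real) \<Rightarrow> nat \<Rightarrow> real" where
  "score s fit g i = s (snd (g i)) (fit g (fst (g i)))"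

definition pval_exact :: "nat \<Rightarrow> (real \<Rightarrow> real \<Rightarrow> real) \<Rightarrow> ((nat \<Rightarrow> 'a \<times> real) \<Rightarrow> 'a \<Rightarrow> real)
    \<Rightarrow> (nat \<Rightarrow> 'a \<times> real) \<Rightarrow> 'a \<Rightarrow> real \<Rightarrow> real" where
  "pval_exact n s fit D x y =
     (let g = augment n D x y in
      (1 + real (card {i \<in> {1..n}. score s fit g i \<ge> score s fit g (Suc n)})) / (real n + 1))"

definition conf_exact :: "nat \<Rightarrow> (real \<Rightarrow> real \<Rightarrow> real) \<Rightarrow> ((nat \<Rightarrow> 'a \<times> real) \<Rightarrow> 'a \<Rightarrow> real)
    \<Rightarrow> real set \<Rightarrow> real \<Rightarrow> (nat \<Rightarrow> 'a \<times> real) \<Rightarrow> 'a \<Rightarrow> real set" where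
  "conf_exact n s fit Yset \<alpha> D x = {y \<in> Yset. pval_exact n s fit D x y > \<alpha>}"

text \<open>Approximate scores Stil g i and error bounds tau g i, for the augmented data set g = D^y.\<close>
definition pval_approx :: "nat \<Rightarrow> ((nat \<Rightarrow> 'a \<times> real) \<Rightarrow> nat \<Rightarrow> real) \<Rightarrow> ((nat \<Rightarrow> 'a \<times> real) \<Rightarrow> nat \<Rightarrow> real)
    \<Rightarrow> (nat \<Rightarrow> 'a \<times> real) \<Rightarrow> 'a \<Rightarrow> real \<Rightarrow> real" where
  "pval_approx n Stil tau D x y =
     (let g = augment n D x y in
      (1 + real (card {i \<in> {1..n}. Stil g i + tau g i \<ge> Stil g (Suc n) - tau g (Suc n)})) / (real n + 1))"

definition conf_approx :: "nat \<Rightarrow> ((nat \<Rightarrow> 'a \<times> real) \<Rightarrow> nat \<Rightarrow> real) \<Rightarrow> ((nat \<Rightarrow> 'a \<times> real) \<Rightarrow> nat \<Rightarrow> real)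
    \<Rightarrow> real set \<Rightarrow> real \<Rightarrow> (nat \<Rightarrow> 'a \<times> real) \<Rightarrow> 'a \<Rightarrow> real set" where
  "conf_approx n Stil tau Yset \<alpha> D x = {y \<in> Yset. pval_approx n Stil tau D x y > \<alpha>}"

definition THK :: "nat \<Rightarrow> (real \<Rightarrow> real \<Rightarrow> real) \<Rightarrow> ((nat \<Rightarrow> 'a \<times> real) \<Rightarrow> 'a \<Rightarrow> real)
    \<Rightarrow> ((nat \<Rightarrow> 'a \<times> real) \<Rightarrow> nat \<Rightarrow> real) \<Rightarrow> ((nat \<Rightarrow> 'a \<times> real) \<Rightarrow> nat \<Rightarrow> real)
    \<Rightarrow> real set \<Rightarrow> real \<Rightarrow> (nat \<Rightarrow> 'a \<times> real) \<Rightarrow> 'a \<Rightarrow> ennreal" where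
  "THK n s fit Stil tau Yset \<alpha> D x =
     emeasure lborel ((conf_approx n Stil tau Yset \<alpha> D x - conf_exact n s fit Yset \<alpha> D x)
                    \<union> (conf_exact n s fit Yset \<alpha> D x - conf_approx n Stil tau Yset \<alpha> D x))"

end

theory Submission
  imports Defs
begin

lemma score_meas:
  fixes fit :: "(nat \<Rightarrow> 'a::euclidean_space \<times> real) \<Rightarrow> 'a \<Rightarrow> real" and s :: "real \<Rightarrow> real \<Rightarrow> real"
  assumes fit_meas: "(\<lambda>(g, x). fit g x) \<in> borel_measurable (PiM I (\<lambda>_. borel) \<Otimes>\<^sub>M borel)"
    and s_meas: "case_prod s \<in> borel_measurable borel"
  shows "(\<lambda>g. score s fit g i) \<in> borel_measurable (PiM I (\<lambda>_. borel))"
proof -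
  have c: "(\<lambda>g. g i) \<in> measurable (PiM I (\<lambda>_. borel)) (borel \<Otimes>\<^sub>M borel :: ('a \<times> real) measure)"
  proof (cases "i \<in> I")
    case True
    then show ?thesis
      using measurable_component_singleton[OF True, of "\<lambda>_. borel :: ('a \<times> real) measure"] by (subst borel_prod) simp
  next
    case False
    have "(\<lambda>_. undefined) \<in> measurable (PiM I (\<lambda>_. borel)) (borel \<Otimes>\<^sub>M borel :: ('a \<times> real) measure)"
      by (rule measurable_const) (simp add: space_pair_measure)
    moreover have "\<And>w. w \<in> space (PiM I (\<lambda>_. borel :: ('a \<times> real) measure)) \<Longrightarrow> w i = undefined"
      using False unfolding space_PiM by (rule PiE_arb[rotated])
    ultimately show ?thesis
      using measurable_cong[of "PiM I (\<lambda>_. borel :: ('a \<times> real) measure)" "\<lambda>g. g i" "\<lambda>_. undefined"] by metis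
  qed
  have f: "(\<lambda>g::nat \<Rightarrow> 'a \<times> real. fst (g i)) \<in> borel_measurable (PiM I (\<lambda>_. borel))"
    using measurable_compose[OF c measurable_fst] by (simp add: comp_def)
  have sn: "(\<lambda>g::nat \<Rightarrow> 'a \<times> real. snd (g i)) \<in> borel_measurable (PiM I (\<lambda>_. borel))"
    using measurable_compose[OF c measurable_snd] by (simp add: comp_def)
  have ft: "(\<lambda>g. fit g (fst (g i))) \<in> borel_measurable (PiM I (\<lambda>_. borel))"
    using measurable_compose[OF measurable_Pair[OF measurable_ident_sets[OF refl] f] fit_meas] by simp
  show ?thesis
    using measurable_compose[OF borel_measurable_Pair[OF sn ft] s_meas] by (simp add: score_def)
qed

lemma card_meas:
  assumes "finite I" "\<And>k. k \<in> I \<Longrightarrow> Measurable.pred N (P k)"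
  shows "(\<lambda>x. real (card {k\<in>I. P k x})) \<in> borel_measurable N"
proof -
  have "\<And>x. real (card {k\<in>I. P k x}) = (\<Sum>k\<in>I. if P k x then 1 else 0)"
    using assms(1) by (simp add: sum.inter_filter[symmetric])
  moreover have "(\<lambda>x. \<Sum>k\<in>I. if P k x then 1 else (0::real)) \<in> borel_measurable N"
    using assms(2) by (intro borel_measurable_sum) (auto intro!: measurable_If)
  ultimately show ?thesis by simp
qed

lemma rank_count:
  fixes S :: "nat \<Rightarrow> real"
  assumes fin: "finite I" and inj: "inj_on S I"
  shows "card {j\<in>I. m < card {k\<in>I. S j \<le> S k}} \<le> card I - m"
proof -
  define R where "R j = card {k\<in>I. S j \<le> S k}" for j
  have lt: "R l < R j" if "j \<in> I" "l \<in> I" "S j < S l" for j l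
  proof -
    have "j \<in> {k\<in>I. S j \<le> S k}" "j \<notin> {k\<in>I. S l \<le> S k}" using that by auto
    moreover have "{k\<in>I. S l \<le> S k} \<subseteq> {k\<in>I. S j \<le> S k}" using that by auto
    ultimately have "{k\<in>I. S l \<le> S k} \<subset> {k\<in>I. S j \<le> S k}" by blast
    then show ?thesis unfolding R_def using fin by (intro psubset_card_mono) auto
  qed
  have injR: "inj_on R I"
  proof (rule inj_onI)
    fix j l assume j: "j \<in> I" and l: "l \<in> I" and e: "R j = R l"
    show "j = l"
    proof (rule ccontr)
      assume "j \<noteq> l"
      then have "S j \<noteq> S l" using inj j l by (auto dest: inj_onD)
      then have "S j < S l \<or> S l < S j" by auto
      then show False using lt[OF j l] lt[OF l j] e by auto
    qed
  qed
  have le: "R j \<le> card I" for j unfolding R_def using fin by (intro card_mono) auto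
  have "card {j\<in>I. m < R j} = card (R ` {j\<in>I. m < R j})"
    using injR by (intro card_image[symmetric]) (auto intro: inj_on_subset)
  also have "\<dots> \<le> card {m<..card I}"
    using le by (intro card_mono) auto
  finally show ?thesis unfolding R_def by simp
qed

lemma card_perm:
  assumes "\<sigma> permutes I"
  shows "card {k\<in>I. P (\<sigma> k)} = card {k\<in>I. P k}"
proof -
  have "{k\<in>I. P k} = \<sigma> ` {k\<in>I. P (\<sigma> k)}"
  proof
    show "\<sigma> ` {k\<in>I. P (\<sigma> k)} \<subseteq> {k\<in>I. P k}"
    proof
      fix x assume "x \<in> \<sigma> ` {k\<in>I. P (\<sigma> k)}"
      then obtain y where "y \<in> I" "P (\<sigma> y)" "x = \<sigma> y" by blast
      then show "x \<in> {k\<in>I. P k}" using permutes_in_image[OF assms] by blast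
    qed
    show "{k\<in>I. P k} \<subseteq> \<sigma> ` {k\<in>I. P (\<sigma> k)}"
    proof
      fix x assume x: "x \<in> {k\<in>I. P k}"
      then have "x \<in> \<sigma> ` I" using permutes_image[OF assms] by auto
      then obtain y where "y \<in> I" "x = \<sigma> y" by auto
      then show "x \<in> \<sigma> ` {k\<in>I. P (\<sigma> k)}" using x by auto
    qed
  qed
  moreover have "inj_on \<sigma> {k\<in>I. P (\<sigma> k)}"
    by (meson permutes_inj[OF assms] inj_on_subset subset_UNIV)
  ultimately show ?thesis by (simp add: card_image)
qed

lemma score_perm:
  assumes fit_perm: "\<And>g \<sigma>. \<sigma> permutes I \<Longrightarrow> fit (\<lambda>i\<in>I. g (\<sigma> i)) = fit (\<lambda>i\<in>I. g i)"
    and \<sigma>: "\<sigma> permutes I" and g: "g \<in> extensional I" and k: "k \<in> I"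
  shows "score s fit (\<lambda>i\<in>I. g (\<sigma> i)) k = score s fit g (\<sigma> k)"
proof -
  have "fit (\<lambda>i\<in>I. g (\<sigma> i)) = fit g"
    using fit_perm[OF \<sigma>, of g] g by (simp add: extensional_restrict)
  then show ?thesis using k by (simp add: score_def)
qed

theorem lemma26:
  fixes M :: "'w measure"
    and X :: "nat \<Rightarrow> 'w \<Rightarrow> 'a::euclidean_space"
    and Y :: "nat \<Rightarrow> 'w \<Rightarrow> real"
    and n :: nat
    and Yset :: "real set"
    and fit :: "(nat \<Rightarrow> 'a \<times> real) \<Rightarrow> 'a \<Rightarrow> real"
    and s :: "real \<Rightarrow> real \<Rightarrow> real"
    and Stil tau :: "(nat \<Rightarrow> 'a \<times> real) \<Rightarrow> nat \<Rightarrow> real"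
    and p :: "((nat \<Rightarrow> 'a \<times> real) \<times> 'a) \<times> real \<Rightarrow> real"
    and c \<alpha> :: real
  assumes M: "prob_space M"
    and X_meas: "\<And>i. i \<in> {1..Suc n} \<Longrightarrow> X i \<in> borel_measurable M"
    and Y_meas: "\<And>i. i \<in> {1..Suc n} \<Longrightarrow> Y i \<in> borel_measurable M"
    and Yset: "Yset \<in> sets borel"
    and Y_in: "\<And>i \<omega>. i \<in> {1..Suc n} \<Longrightarrow> \<omega> \<in> space M \<Longrightarrow> Y i \<omega> \<in> Yset"
    and exch: "\<And>\<sigma>. \<sigma> permutes {1..Suc n} \<Longrightarrow>
       distr M (PiM {1..Suc n} (\<lambda>_. borel)) (\<lambda>\<omega>. \<lambda>i\<in>{1..Suc n}. (X (\<sigma> i) \<omega>, Y (\<sigma> i) \<omega>))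
     = distr M (PiM {1..Suc n} (\<lambda>_. borel)) (\<lambda>\<omega>. \<lambda>i\<in>{1..Suc n}. (X i \<omega>, Y i \<omega>))"
    and fit_meas: "(\<lambda>(g, x). fit g x) \<in> borel_measurable (PiM {1..Suc n} (\<lambda>_. borel) \<Otimes>\<^sub>M borel)"
    and fit_perm: "\<And>g \<sigma>. \<sigma> permutes {1..Suc n} \<Longrightarrow>
       fit (\<lambda>i\<in>{1..Suc n}. g (\<sigma> i)) = fit (\<lambda>i\<in>{1..Suc n}. g i)"
    and s_meas: "case_prod s \<in> borel_measurable borel"
    and Stil_meas: "\<And>i. (\<lambda>g. Stil g i) \<in> borel_measurable (PiM {1..Suc n} (\<lambda>_. borel))"
    and tau_meas: "\<And>i. (\<lambda>g. tau g i) \<in> borel_measurable (PiM {1..Suc n} (\<lambda>_. borel))"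
    and approx: "\<And>\<omega> y i. \<omega> \<in> space M \<Longrightarrow> y \<in> Yset \<Longrightarrow> i \<in> {1..Suc n} \<Longrightarrow>
       (let g = augment n (\<lambda>j\<in>{1..n}. (X j \<omega>, Y j \<omega>)) (X (Suc n) \<omega>) y in
          0 \<le> tau g i \<and> \<bar>score s fit g i - Stil g i\<bar> \<le> tau g i)"
    and distinct: "AE \<omega> in M. inj_on
       (score s fit (augment n (\<lambda>j\<in>{1..n}. (X j \<omega>, Y j \<omega>)) (X (Suc n) \<omega>) (Y (Suc n) \<omega>))) {1..Suc n}"
    and c_pos: "c > 0"
    and p_meas: "p \<in> borel_measurable ((PiM {1..n} (\<lambda>_. borel) \<Otimes>\<^sub>M borel) \<Otimes>\<^sub>M borel)"
    and p_nonneg: "\<And>w y. 0 \<le> p (w, y)"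
    and p_bound: "\<And>w y. y \<in> Yset \<Longrightarrow> p (w, y) \<le> c"
    and p_density: "\<And>A B. A \<in> sets borel \<Longrightarrow> B \<in> sets (PiM {1..n} (\<lambda>_. borel) \<Otimes>\<^sub>M borel) \<Longrightarrow>
       emeasure M {\<omega> \<in> space M. Y (Suc n) \<omega> \<in> A \<and>
                     ((\<lambda>j\<in>{1..n}. (X j \<omega>, Y j \<omega>)), X (Suc n) \<omega>) \<in> B}
       = (\<integral>\<^sup>+ w. indicator B w * (\<integral>\<^sup>+ y. indicator A y * ennreal (p (w, y)) \<partial>lborel)
            \<partial>(distr M (PiM {1..n} (\<lambda>_. borel) \<Otimes>\<^sub>M borel)
                  (\<lambda>\<omega>. ((\<lambda>j\<in>{1..n}. (X j \<omega>, Y j \<omega>)), X (Suc n) \<omega>))))"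
    and \<alpha>: "0 < \<alpha>" "\<alpha> < 1"
  shows "ennreal (measure M {\<omega> \<in> space M. Y (Suc n) \<omega> \<in>
            conf_approx n Stil tau Yset \<alpha> (\<lambda>j\<in>{1..n}. (X j \<omega>, Y j \<omega>)) (X (Suc n) \<omega>)})
    \<le> ennreal (1 - \<alpha> + 1 / (real n + 1))
       + ennreal c * (\<integral>\<^sup>+ \<omega>. THK n s fit Stil tau Yset \<alpha> (\<lambda>j\<in>{1..n}. (X j \<omega>, Y j \<omega>)) (X (Suc n) \<omega>) \<partial>M)"
proof -
  interpret prob_space M by (rule M)
  define D where "D = (\<lambda>\<omega>. \<lambda>j\<in>{1..n}. (X j \<omega>, Y j \<omega>))"
  define Z where "Z = (\<lambda>\<omega>. \<lambda>i\<in>{1..Suc n}. (X i \<omega>, Y i \<omega>))"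
  define W where "W = (\<lambda>\<omega>. (D \<omega>, X (Suc n) \<omega>))"
  define R where "R = (\<lambda>j g. card {k\<in>{1..Suc n}. score s fit g j \<le> score s fit g k})"
  have XYm: "\<And>i. i \<in> {1..Suc n} \<Longrightarrow> (\<lambda>\<omega>. (X i \<omega>, Y i \<omega>)) \<in> borel_measurable M"
    using X_meas Y_meas by (intro borel_measurable_Pair) auto
  have Zm: "Z \<in> measurable M (PiM {1..Suc n} (\<lambda>_. borel))"
    unfolding Z_def by (intro measurable_restrict XYm)
  have Dm: "D \<in> measurable M (PiM {1..n} (\<lambda>_. borel))"
    unfolding D_def by (intro measurable_restrict XYm) auto
  have Wm: "W \<in> measurable M (PiM {1..n} (\<lambda>_. borel) \<Otimes>\<^sub>M borel)"
    unfolding W_def using Dm X_meas by (intro measurable_Pair) auto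
  have Ym: "Y (Suc n) \<in> borel_measurable M" using Y_meas by auto
  have scm[measurable]: "\<And>i. (\<lambda>g. score s fit g i) \<in> borel_measurable (PiM {1..Suc n} (\<lambda>_. borel))"
    using score_meas[OF fit_meas s_meas] .
  have Rm[measurable]: "\<And>j. (\<lambda>g. real (R j g)) \<in> borel_measurable (PiM {1..Suc n} (\<lambda>_. borel))"
    unfolding R_def by (intro card_meas) (rule finite_atLeastAtMost, unfold pred_def, intro borel_measurable_le scm)
  have ZD: "\<And>\<omega>. augment n (D \<omega>) (X (Suc n) \<omega>) (Y (Suc n) \<omega>) = Z \<omega>"
    unfolding augment_def D_def Z_def by (auto simp: restrict_def fun_eq_iff)
  define m where "m = nat \<lfloor>\<alpha> * (real n + 1)\<rfloor>"
  define A where "A = (\<lambda>j. {\<omega> \<in> space M. m < R j (Z \<omega>)})"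
  have Am: "A j \<in> sets M" for j
  proof -
    have "(\<lambda>\<omega>. real (R j (Z \<omega>))) \<in> borel_measurable M"
      using measurable_compose[OF Zm Rm] .
    then have "{\<omega> \<in> space M. real m < real (R j (Z \<omega>))} \<in> sets M"
      by (intro borel_measurable_less) auto
    then show ?thesis unfolding A_def by simp
  qed
  have swap: "measure M (A (Suc n)) = measure M (A j)" if j: "j \<in> {1..Suc n}" for j
  proof -
    define \<sigma> where "\<sigma> = Transposition.transpose j (Suc n)"
    have \<sigma>p: "\<sigma> permutes {1..Suc n}" unfolding \<sigma>_def using j by (intro permutes_swap_id) auto
    define Z' where "Z' = (\<lambda>\<omega>. \<lambda>i\<in>{1..Suc n}. (X (\<sigma> i) \<omega>, Y (\<sigma> i) \<omega>))"
    have Z'm: "Z' \<in> measurable M (PiM {1..Suc n} (\<lambda>_. borel))"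
      unfolding Z'_def by (intro measurable_restrict XYm) (use permutes_in_image[OF \<sigma>p] in blast)
    define B where "B = {g \<in> space (PiM {1..Suc n} (\<lambda>_. borel :: ('a \<times> real) measure)). real m < real (R (Suc n) g)}"
    have Bm: "B \<in> sets (PiM {1..Suc n} (\<lambda>_. borel))"
      unfolding B_def by (intro borel_measurable_less borel_measurable_const Rm)
    have RZ': "R (Suc n) (Z' \<omega>) = R j (Z \<omega>)" for \<omega>
    proof -
      have Z'eq: "Z' \<omega> = (\<lambda>i\<in>{1..Suc n}. Z \<omega> (\<sigma> i))"
        unfolding Z'_def Z_def using permutes_in_image[OF \<sigma>p] by (auto simp: restrict_def fun_eq_iff)
      have ext: "Z \<omega> \<in> extensional {1..Suc n}" unfolding Z_def by simp
      have sn: "Suc n \<in> {1..Suc n}" by simp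
      have "R (Suc n) (Z' \<omega>) = card {k\<in>{1..Suc n}. score s fit (Z \<omega>) (\<sigma> (Suc n)) \<le> score s fit (Z \<omega>) (\<sigma> k)}"
        unfolding R_def Z'eq using score_perm[where I="{1..Suc n}" and fit=fit and s=s, OF fit_perm \<sigma>p ext] sn
        by (intro arg_cong[where f=card]) auto
      also have "\<dots> = card {k\<in>{1..Suc n}. score s fit (Z \<omega>) j \<le> score s fit (Z \<omega>) (\<sigma> k)}"
        unfolding \<sigma>_def by simp
      also have "\<dots> = R j (Z \<omega>)"
        unfolding R_def by (rule card_perm[OF \<sigma>p])
      finally show ?thesis .
    qed
    have "measure M (A (Suc n)) = measure (distr M (PiM {1..Suc n} (\<lambda>_. borel)) Z) B"
      using measurable_space[OF Zm] by (subst measure_distr[OF Zm Bm]) (auto simp: A_def B_def intro!: arg_cong[where f="measure M"])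
    also have "\<dots> = measure (distr M (PiM {1..Suc n} (\<lambda>_. borel)) Z') B"
      using exch[OF \<sigma>p] unfolding Z_def Z'_def by simp
    also have "\<dots> = measure M (A j)"
      using measurable_space[OF Z'm] by (subst measure_distr[OF Z'm Bm]) (auto simp: A_def B_def RZ' intro!: arg_cong[where f="measure M"])
    finally show ?thesis .
  qed
  have sumA: "(\<Sum>j\<in>{1..Suc n}. indicator (A j) \<omega>) \<le> real (Suc n - m)"
    if \<omega>: "\<omega> \<in> space M" and inj: "inj_on (score s fit (Z \<omega>)) {1..Suc n}" for \<omega>
  proof -
    have "(\<Sum>j\<in>{1..Suc n}. indicator (A j) \<omega> :: real) = (\<Sum>j\<in>{1..Suc n}. if m < R j (Z \<omega>) then 1 else 0)"
      using \<omega> by (intro sum.cong) (auto simp: A_def indicator_def)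
    also have "\<dots> = (\<Sum>j\<in>{j\<in>{1..Suc n}. m < R j (Z \<omega>)}. 1)"
      by (rule sum.inter_filter[symmetric]) simp
    also have "\<dots> = real (card {j\<in>{1..Suc n}. m < R j (Z \<omega>)})"
      by simp
    also have "\<dots> \<le> real (card {1..Suc n} - m)"
      unfolding R_def using rank_count[OF _ inj, of m] by simp
    finally show ?thesis by simp
  qed
  have AEinj: "AE \<omega> in M. inj_on (score s fit (Z \<omega>)) {1..Suc n}"
    using distinct unfolding ZD[unfolded D_def] .
  have "(\<Sum>j\<in>{1..Suc n}. measure M (A j)) = (\<Sum>j\<in>{1..Suc n}. measure M (A (Suc n)))"
    by (rule sum.cong[OF refl]) (rule swap[symmetric])
  then have "real (Suc n) * measure M (A (Suc n)) = (\<Sum>j\<in>{1..Suc n}. measure M (A j))"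
    by simp
  also have "\<dots> = (\<integral>\<omega>. (\<Sum>j\<in>{1..Suc n}. indicator (A j) \<omega>) \<partial>M)"
    using Am by (subst Bochner_Integration.integral_sum) (auto simp: emeasure_finite less_top[symmetric])
  also have "\<dots> \<le> (\<integral>\<omega>. real (Suc n - m) \<partial>M)"
    using Am AEinj sumA by (intro integral_mono_AE) (auto simp: emeasure_finite less_top[symmetric])
  also have "\<dots> = real (Suc n - m)" by (simp add: prob_space)
  finally have A1: "real (Suc n) * measure M (A (Suc n)) \<le> real (Suc n - m)" .
  have A2: "measure M (A (Suc n)) \<le> 1 - \<alpha> + 1 / (real n + 1)"
  proof -
    have fl: "real m > \<alpha> * (real n + 1) - 1" "real m \<le> \<alpha> * (real n + 1)"
    proof -
      have x0: "0 \<le> \<alpha> * (real n + 1)" using \<alpha> by simp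
      have rm: "real m = of_int \<lfloor>\<alpha> * (real n + 1)\<rfloor>" unfolding m_def using x0 by simp
      show "real m > \<alpha> * (real n + 1) - 1" unfolding rm using real_of_int_floor_gt_diff_one by blast
      show "real m \<le> \<alpha> * (real n + 1)" unfolding rm by (rule of_int_floor_le)
    qed
    have "m \<le> Suc n" using fl \<alpha> by (smt (verit) of_nat_le_iff mult_left_le_one_le of_nat_Suc of_nat_0_le_iff)
    then have "real (Suc n - m) = real n + 1 - real m" by simp
    then have "(real n + 1) * measure M (A (Suc n)) \<le> (real n + 1) * (1 - \<alpha> + 1 / (real n + 1))"
      using A1 fl by (simp add: algebra_simps)
    then show ?thesis by (simp add: mult_le_cancel_left_pos add_pos_pos)
  qed
  define WS where "WS = (PiM {1..n} (\<lambda>_. borel) \<Otimes>\<^sub>M borel :: ((nat \<Rightarrow> 'a \<times> real) \<times> 'a) measure)"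
  define PW where "PW = distr M WS W"
  define N1 where "N1 = distr M (WS \<Otimes>\<^sub>M lborel) (\<lambda>\<omega>. (W \<omega>, Y (Suc n) \<omega>))"
  define N2 where "N2 = density (PW \<Otimes>\<^sub>M lborel) (\<lambda>z. ennreal (p z))"
  have Wm': "W \<in> measurable M WS" unfolding WS_def by (rule Wm)
  have WYm: "(\<lambda>\<omega>. (W \<omega>, Y (Suc n) \<omega>)) \<in> measurable M (WS \<Otimes>\<^sub>M lborel)"
    using Wm' Ym by (intro measurable_Pair) auto
  have setsPW: "sets (PW \<Otimes>\<^sub>M lborel) = sets (WS \<Otimes>\<^sub>M borel)"
    unfolding PW_def by (intro sets_pair_measure_cong sets_distr sets_lborel)
  have setsWl: "sets (WS \<Otimes>\<^sub>M lborel) = sets (WS \<Otimes>\<^sub>M borel)"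
    by (intro sets_pair_measure_cong refl sets_lborel)
  have pm: "p \<in> borel_measurable (PW \<Otimes>\<^sub>M lborel)"
    using p_meas unfolding measurable_cong_sets[OF setsPW refl] WS_def .
  have spacePW: "space PW = space WS" unfolding PW_def by simp
  have N12: "N1 = N2"
  proof (rule measure_eqI_generator_eq[OF Int_stable_pair_measure_generator pair_measure_closed])
    show "sets N1 = sigma_sets (space WS \<times> space lborel) {a \<times> b |a b. a \<in> sets WS \<and> b \<in> sets lborel}"
      unfolding N1_def by (simp add: sets_pair_measure)
    show "sets N2 = sigma_sets (space WS \<times> space lborel) {a \<times> b |a b. a \<in> sets WS \<and> b \<in> sets lborel}"
      unfolding N2_def PW_def by (simp add: sets_pair_measure)
    show "range (\<lambda>_. space WS \<times> space lborel) \<subseteq> {a \<times> b |a b. a \<in> sets WS \<and> b \<in> sets lborel}"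
      by blast
    show "(\<Union>i. space WS \<times> space lborel) = space WS \<times> space lborel" by simp
    show "emeasure N1 (space WS \<times> space lborel) \<noteq> \<infinity>" for i :: nat
      unfolding N1_def by (subst emeasure_distr[OF WYm]) (auto simp: space_pair_measure emeasure_finite)
    fix Q :: "(((nat \<Rightarrow> 'a \<times> real) \<times> 'a) \<times> real) set" assume "Q \<in> {a \<times> b |a b. a \<in> sets WS \<and> b \<in> sets lborel}"
    then obtain a b where Q: "Q = a \<times> b" and a: "a \<in> sets WS" and b: "b \<in> sets lborel" by blast
    have abm[measurable]: "a \<times> b \<in> sets (PW \<Otimes>\<^sub>M lborel)"
      unfolding setsPW using a b by (intro pair_measureI) auto
    note pm[measurable]
    have pme: "(\<lambda>z. ennreal (p z)) \<in> borel_measurable (PW \<Otimes>\<^sub>M lborel)" by measurable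
    have Qmeas: "(\<lambda>z. ennreal (p z) * indicator Q z) \<in> borel_measurable (PW \<Otimes>\<^sub>M lborel)"
      unfolding Q by measurable
    have "emeasure N1 Q = emeasure M {\<omega> \<in> space M. Y (Suc n) \<omega> \<in> b \<and> W \<omega> \<in> a}"
      unfolding N1_def Q using a b by (subst emeasure_distr[OF WYm]) (auto intro!: arg_cong[where f="emeasure M"])
    also have "\<dots> = (\<integral>\<^sup>+ w. indicator a w * (\<integral>\<^sup>+ y. indicator b y * ennreal (p (w, y)) \<partial>lborel) \<partial>PW)"
      using p_density[of b a] a b unfolding PW_def W_def D_def WS_def by simp
    also have "\<dots> = (\<integral>\<^sup>+ w. (\<integral>\<^sup>+ y. ennreal (p (w, y)) * indicator Q (w, y) \<partial>lborel) \<partial>PW)"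
    proof (rule nn_integral_cong)
      fix w assume w: "w \<in> space PW"
      have "(\<lambda>y. p (w, y)) \<in> borel_measurable lborel"
        using measurable_compose_Pair1[OF w pm] .
      then have "(\<integral>\<^sup>+ y. indicator a w * (indicator b y * ennreal (p (w, y))) \<partial>lborel)
          = indicator a w * (\<integral>\<^sup>+ y. indicator b y * ennreal (p (w, y)) \<partial>lborel)"
        using b by (intro nn_integral_cmult) auto
      then show "indicator a w * (\<integral>\<^sup>+ y. indicator b y * ennreal (p (w, y)) \<partial>lborel)
          = (\<integral>\<^sup>+ y. ennreal (p (w, y)) * indicator Q (w, y) \<partial>lborel)"
        unfolding Q by (simp add: indicator_times mult_ac)
    qed
    also have "\<dots> = (\<integral>\<^sup>+ z. ennreal (p z) * indicator Q z \<partial>(PW \<Otimes>\<^sub>M lborel))"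
      by (rule lborel.nn_integral_fst[OF Qmeas])
    also have "\<dots> = emeasure N2 Q"
      unfolding N2_def Q by (rule emeasure_density[OF pme abm, symmetric])
    finally show "emeasure N1 Q = emeasure N2 Q" .
  qed
  have augm: "(\<lambda>z. augment n (fst (fst z)) (snd (fst z)) (snd z)) \<in> measurable (WS \<Otimes>\<^sub>M lborel) (PiM {1..Suc n} (\<lambda>_. borel))"
    unfolding augment_def
  proof (intro measurable_restrict)
    fix i assume i: "i \<in> {1..Suc n}"
    show "(\<lambda>z. if i = Suc n then (snd (fst z), snd z) else fst (fst z) i) \<in> borel_measurable (WS \<Otimes>\<^sub>M lborel)"
    proof (cases "i = Suc n")
      case True
      have "(\<lambda>z. (snd (fst z), snd z)) \<in> borel_measurable (WS \<Otimes>\<^sub>M lborel)"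
        unfolding WS_def by (intro borel_measurable_Pair) measurable
      then show ?thesis using True by simp
    next
      case False
      then have i': "i \<in> {1..n}" using i by auto
      have "(\<lambda>g. g i) \<in> measurable (PiM {1..n} (\<lambda>_. borel :: ('a \<times> real) measure)) borel"
        by (rule measurable_component_singleton[OF i'])
      then have "(\<lambda>z. fst (fst z) i) \<in> borel_measurable (WS \<Otimes>\<^sub>M lborel)"
        unfolding WS_def by measurable
      then show ?thesis using False by simp
    qed
  qed
  have pe_eq: "pval_exact n s fit (fst (fst z)) (snd (fst z)) (snd z)
     = (1 + real (card {i\<in>{1..n}. score s fit (augment n (fst (fst z)) (snd (fst z)) (snd z)) (Suc n)
                   \<le> score s fit (augment n (fst (fst z)) (snd (fst z)) (snd z)) i})) / (real n + 1)" for z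
    by (simp add: pval_exact_def Let_def)
  have pa_eq: "pval_approx n Stil tau (fst (fst z)) (snd (fst z)) (snd z)
     = (1 + real (card {i\<in>{1..n}. Stil (augment n (fst (fst z)) (snd (fst z)) (snd z)) (Suc n)
                        - tau (augment n (fst (fst z)) (snd (fst z)) (snd z)) (Suc n)
                   \<le> Stil (augment n (fst (fst z)) (snd (fst z)) (snd z)) i
                        + tau (augment n (fst (fst z)) (snd (fst z)) (snd z)) i})) / (real n + 1)" for z
    by (simp add: pval_approx_def Let_def)
  have pem[measurable]: "(\<lambda>z. pval_exact n s fit (fst (fst z)) (snd (fst z)) (snd z)) \<in> borel_measurable (WS \<Otimes>\<^sub>M lborel)"
    unfolding pe_eq
    by (intro borel_measurable_divide borel_measurable_add borel_measurable_const card_meas finite_atLeastAtMost)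
       (unfold pred_def, intro borel_measurable_le measurable_compose[OF augm scm])
  have pam[measurable]: "(\<lambda>z. pval_approx n Stil tau (fst (fst z)) (snd (fst z)) (snd z)) \<in> borel_measurable (WS \<Otimes>\<^sub>M lborel)"
    unfolding pa_eq
    by (intro borel_measurable_divide borel_measurable_add borel_measurable_const card_meas finite_atLeastAtMost)
       (unfold pred_def, intro borel_measurable_le borel_measurable_add borel_measurable_diff
          measurable_compose[OF augm Stil_meas] measurable_compose[OF augm tau_meas])
  define symd where "symd = (\<lambda>w. (conf_approx n Stil tau Yset \<alpha> (fst w) (snd w) - conf_exact n s fit Yset \<alpha> (fst w) (snd w))
     \<union> (conf_exact n s fit Yset \<alpha> (fst w) (snd w) - conf_approx n Stil tau Yset \<alpha> (fst w) (snd w)))"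
  define E where "E = {z \<in> space (WS \<Otimes>\<^sub>M lborel). snd z \<in> symd (fst z)}"
  have Eeq: "E = {z \<in> space (WS \<Otimes>\<^sub>M lborel). snd z \<in> Yset \<and>
      ((\<alpha> < pval_approx n Stil tau (fst (fst z)) (snd (fst z)) (snd z) \<and> \<not> \<alpha> < pval_exact n s fit (fst (fst z)) (snd (fst z)) (snd z))
     \<or> (\<alpha> < pval_exact n s fit (fst (fst z)) (snd (fst z)) (snd z) \<and> \<not> \<alpha> < pval_approx n Stil tau (fst (fst z)) (snd (fst z)) (snd z)))}"
    unfolding E_def symd_def conf_approx_def conf_exact_def by auto
  note Yset[measurable]
  have Em: "E \<in> sets (WS \<Otimes>\<^sub>M lborel)"
    unfolding Eeq by measurable
  define S2 where "S2 = {\<omega> \<in> space M. (W \<omega>, Y (Suc n) \<omega>) \<in> E}"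
  have S2eq: "S2 = (\<lambda>\<omega>. (W \<omega>, Y (Suc n) \<omega>)) -` E \<inter> space M" unfolding S2_def by auto
  have S2m: "S2 \<in> sets M" unfolding S2eq by (rule measurable_sets[OF WYm Em])
  have EmPW: "E \<in> sets (PW \<Otimes>\<^sub>M lborel)" using Em unfolding setsPW setsWl .
  have pme: "(\<lambda>z. ennreal (p z)) \<in> borel_measurable (PW \<Otimes>\<^sub>M lborel)" using pm by measurable
  have Fm: "(\<lambda>z. ennreal (p z) * indicator E z) \<in> borel_measurable (PW \<Otimes>\<^sub>M lborel)"
    using pme EmPW by measurable
  have FmW: "(\<lambda>z. ennreal (p z) * indicator E z) \<in> borel_measurable (WS \<Otimes>\<^sub>M lborel)"
    using Fm unfolding measurable_cong_sets[OF setsPW refl] measurable_cong_sets[OF setsWl refl] .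
  define G where "G = (\<lambda>w. \<integral>\<^sup>+ y. ennreal (p (w, y)) * indicator E (w, y) \<partial>lborel)"
  have Gm: "G \<in> borel_measurable WS"
    unfolding G_def using lborel.borel_measurable_nn_integral_fst[OF FmW] by simp
  define L where "L = (\<lambda>w. emeasure lborel (Pair w -` E))"
  have Lm: "L \<in> borel_measurable WS"
    unfolding L_def by (rule lborel.measurable_emeasure_Pair[OF Em])
  have GL: "G w \<le> ennreal c * L w" if w: "w \<in> space WS" for w
  proof -
    have "G w \<le> (\<integral>\<^sup>+ y. ennreal c * indicator (Pair w -` E) y \<partial>lborel)"
      unfolding G_def
    proof (rule nn_integral_mono)
      fix y
      show "ennreal (p (w, y)) * indicator E (w, y) \<le> ennreal c * indicator (Pair w -` E) y"
      proof (cases "(w, y) \<in> E")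
        case True
        then have "y \<in> Yset" unfolding E_def symd_def conf_approx_def conf_exact_def by auto
        then have "p (w, y) \<le> c" by (rule p_bound)
        then show ?thesis using True by (simp add: ennreal_leI)
      qed simp
    qed
    also have "\<dots> = ennreal c * L w"
      unfolding L_def by (rule nn_integral_cmult_indicator[OF sets_Pair1[OF Em]])
    finally show ?thesis .
  qed
  have S2bound: "emeasure M S2 \<le> ennreal c * (\<integral>\<^sup>+ \<omega>. THK n s fit Stil tau Yset \<alpha> (\<lambda>j\<in>{1..n}. (X j \<omega>, Y j \<omega>)) (X (Suc n) \<omega>) \<partial>M)"
  proof -
    have "emeasure M S2 = emeasure N1 E"
      unfolding N1_def S2eq by (rule emeasure_distr[OF WYm Em, symmetric])
    also have "\<dots> = emeasure N2 E" by (simp add: N12)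
    also have "\<dots> = (\<integral>\<^sup>+ z. ennreal (p z) * indicator E z \<partial>(PW \<Otimes>\<^sub>M lborel))"
      unfolding N2_def by (rule emeasure_density[OF pme EmPW])
    also have "\<dots> = (\<integral>\<^sup>+ w. G w \<partial>PW)"
      unfolding G_def by (rule lborel.nn_integral_fst[OF Fm, symmetric])
    also have "\<dots> = (\<integral>\<^sup>+ \<omega>. G (W \<omega>) \<partial>M)"
      unfolding PW_def using Gm by (subst nn_integral_distr[OF Wm']) simp_all
    also have "\<dots> \<le> (\<integral>\<^sup>+ \<omega>. ennreal c * L (W \<omega>) \<partial>M)"
      using measurable_space[OF Wm'] GL by (intro nn_integral_mono) auto
    also have "\<dots> = ennreal c * (\<integral>\<^sup>+ \<omega>. L (W \<omega>) \<partial>M)"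
      by (rule nn_integral_cmult[OF measurable_compose[OF Wm' Lm]])
    also have "(\<integral>\<^sup>+ \<omega>. L (W \<omega>) \<partial>M) = (\<integral>\<^sup>+ \<omega>. THK n s fit Stil tau Yset \<alpha> (\<lambda>j\<in>{1..n}. (X j \<omega>, Y j \<omega>)) (X (Suc n) \<omega>) \<partial>M)"
    proof (rule nn_integral_cong)
      fix \<omega> assume "\<omega> \<in> space M"
      then have "W \<omega> \<in> space WS" using measurable_space[OF Wm'] by auto
      then have "Pair (W \<omega>) -` E = symd (W \<omega>)" unfolding E_def by (auto simp: space_pair_measure)
      then show "L (W \<omega>) = THK n s fit Stil tau Yset \<alpha> (\<lambda>j\<in>{1..n}. (X j \<omega>, Y j \<omega>)) (X (Suc n) \<omega>)"
        unfolding L_def THK_def symd_def W_def D_def by simp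
    qed
    finally show ?thesis .
  qed
  have cardS: "R (Suc n) (Z \<omega>) = Suc (card {i\<in>{1..n}. score s fit (Z \<omega>) (Suc n) \<le> score s fit (Z \<omega>) i})" for \<omega>
  proof -
    have "{k\<in>{1..Suc n}. score s fit (Z \<omega>) (Suc n) \<le> score s fit (Z \<omega>) k}
        = insert (Suc n) {i\<in>{1..n}. score s fit (Z \<omega>) (Suc n) \<le> score s fit (Z \<omega>) i}" by auto
    then show ?thesis unfolding R_def by simp
  qed
  define S where "S = {\<omega> \<in> space M. Y (Suc n) \<omega> \<in> conf_approx n Stil tau Yset \<alpha> (\<lambda>j\<in>{1..n}. (X j \<omega>, Y j \<omega>)) (X (Suc n) \<omega>)}"
  have Ssub: "S \<subseteq> A (Suc n) \<union> S2"
  proof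
    fix \<omega> assume "\<omega> \<in> S"
    then have \<omega>: "\<omega> \<in> space M" and ya: "Y (Suc n) \<omega> \<in> conf_approx n Stil tau Yset \<alpha> (D \<omega>) (X (Suc n) \<omega>)"
      unfolding S_def D_def by auto
    show "\<omega> \<in> A (Suc n) \<union> S2"
    proof (cases "\<alpha> < pval_exact n s fit (D \<omega>) (X (Suc n) \<omega>) (Y (Suc n) \<omega>)")
      case True
      then have "\<alpha> < real (R (Suc n) (Z \<omega>)) / (real n + 1)"
        unfolding pval_exact_def Let_def ZD cardS by simp
      then have "\<alpha> * (real n + 1) < real (R (Suc n) (Z \<omega>))"
        by (simp add: pos_less_divide_eq add_pos_pos)
      moreover have "real m \<le> \<alpha> * (real n + 1)"
        unfolding m_def using \<alpha> by (simp add: of_int_floor_le)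
      ultimately have "m < R (Suc n) (Z \<omega>)" by linarith
      then show ?thesis using \<omega> unfolding A_def by auto
    next
      case False
      have "Y (Suc n) \<omega> \<in> Yset" using Y_in[OF _ \<omega>] by simp
      then have "Y (Suc n) \<omega> \<in> symd (W \<omega>)"
        using False ya unfolding symd_def W_def conf_exact_def by auto
      moreover have "(W \<omega>, Y (Suc n) \<omega>) \<in> space (WS \<Otimes>\<^sub>M lborel)"
        using measurable_space[OF WYm \<omega>] .
      ultimately show ?thesis using \<omega> unfolding S2_def E_def by auto
    qed
  qed
  have "ennreal (measure M S) = emeasure M S" by (simp add: emeasure_eq_measure)
  also have "\<dots> \<le> emeasure M (A (Suc n) \<union> S2)"
    using Ssub Am S2m by (intro emeasure_mono) auto
  also have "\<dots> \<le> emeasure M (A (Suc n)) + emeasure M S2"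
    using Am S2m by (rule emeasure_subadditive)
  also have "\<dots> \<le> ennreal (1 - \<alpha> + 1 / (real n + 1))
       + ennreal c * (\<integral>\<^sup>+ \<omega>. THK n s fit Stil tau Yset \<alpha> (\<lambda>j\<in>{1..n}. (X j \<omega>, Y j \<omega>)) (X (Suc n) \<omega>) \<partial>M)"
    using A2 S2bound by (intro add_mono) (auto simp: emeasure_eq_measure intro: ennreal_leI)
  finally show ?thesis unfolding S_def .
qed

end
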